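(* Let $f\in C(\mathbb{R}^2)$ be $\kappa$-Lipschitz and satisfy $f(r+l,\tau+k)=f(r,\tau)$ for all $(l,k)\in\mathbb{Z}^2$, and let $v(\tau;c)$ be the solution of $\dot v=f(v,\tau)$, $\tau>0$, $v(0)=c$. Then for all $\sigma,l,t>0$ and all $c\in\mathbb{R}$, \[v((\sigma+l)t;(\sigma+l)c)\le v(\sigma t;\sigma c)+v(lt;lc)+2(\|f\|_\infty+1).\] *)

theory Defs
  imports "HOL-Analysis.Analysis"
begin

end

theory Submission
  imports Defs
begin

lemma comparison:
  fixes f :: "real \<times> real \<Rightarrow> real" and w b :: "real \<Rightarrow> real"
  assumes lip: "lipschitz_on \<kappa> UNIV f"
    and cw: "continuous_on {Ts..} w" and cb: "continuous_on {Ts..} b"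
    and dw: "\<And>\<tau>. \<tau> > Ts \<Longrightarrow> (w has_real_derivative f (w \<tau>, \<tau>)) (at \<tau>)"
    and db: "\<And>\<tau>. \<tau> > Ts \<Longrightarrow> (b has_real_derivative f (b \<tau>, \<tau>)) (at \<tau>)"
    and init: "w Ts \<le> b Ts" and t1: "\<tau>1 \<ge> Ts"
  shows "w \<tau>1 \<le> b \<tau>1"
proof (rule ccontr)
  assume neg: "\<not> w \<tau>1 \<le> b \<tau>1"
  define d where "d = (\<lambda>x. w x - b x)"
  have d1: "d \<tau>1 > 0" using neg by (simp add: d_def)
  have cd: "continuous_on {Ts..} d" unfolding d_def using cw cb by (intro continuous_intros)
  have k0: "\<kappa> \<ge> 0" using lip by (rule lipschitz_on_nonneg)
  have lipf: "\<bar>f (x, \<tau>) - f (y, \<tau>)\<bar> \<le> \<kappa> * \<bar>x - y\<bar>" for x y \<tau>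
    using lipschitz_onD[OF lip, of "(x,\<tau>)" "(y,\<tau>)"] by (simp add: dist_Pair_Pair dist_real_def)
  define S where "S = {x \<in> {Ts..\<tau>1}. d x \<le> 0}"
  have cdS: "continuous_on {Ts..\<tau>1} d" using cd by (rule continuous_on_subset) auto
  have closedS: "closed S" unfolding S_def
    using continuous_closed_preimage[OF cdS, of "{..0}"] by (simp add: vimage_def Int_def)
  have "Ts \<in> S" using init t1 by (simp add: S_def d_def)
  hence neS: "S \<noteq> {}" by auto
  have bS: "bdd_above S" unfolding S_def by (auto intro: bdd_aboveI[of _ \<tau>1])
  define t0 where "t0 = Sup S"
  have t0S: "t0 \<in> S" unfolding t0_def using neS bS closedS by (rule closed_contains_Sup)
  have t0le: "t0 \<le> \<tau>1" "Ts \<le> t0" "d t0 \<le> 0" using t0S by (auto simp: S_def)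
  have t0lt: "t0 < \<tau>1" using t0le d1 by (cases "t0 = \<tau>1") auto
  have pos: "d x > 0" if "t0 < x" "x \<le> \<tau>1" for x
  proof (rule ccontr)
    assume "\<not> d x > 0"
    hence "x \<in> S" using that t0le by (auto simp: S_def)
    hence "x \<le> t0" unfolding t0_def using bS by (rule cSup_upper)
    thus False using that by simp
  qed
  define h where "h = (\<lambda>x. exp (- \<kappa> * x) * d x)"
  have dd: "(d has_real_derivative f (w x, x) - f (b x, x)) (at x)" if "x > Ts" for x
    unfolding d_def using dw[OF that] db[OF that] by (intro derivative_intros)
  have dh: "(h has_real_derivative (- \<kappa> * exp (- \<kappa> * x) * d x + exp (- \<kappa> * x) * (f (w x, x) - f (b x, x)))) (at x)"
    if "x > Ts" for x
    unfolding h_def using dd[OF that]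
    by (auto intro!: derivative_eq_intros)
  have ch: "continuous_on {t0..\<tau>1} h" unfolding h_def
    using cd t0le by (intro continuous_intros) (auto elim: continuous_on_subset)
  obtain L z where z: "t0 < z" "z < \<tau>1" "DERIV h z :> L" "h \<tau>1 - h t0 = (\<tau>1 - t0) * L"
    using MVT[OF t0lt ch] dh t0le by (meson less_le_trans not_le real_differentiable_def)
  have zT: "z > Ts" using z t0le by linarith
  have L: "L = - \<kappa> * exp (- \<kappa> * z) * d z + exp (- \<kappa> * z) * (f (w z, z) - f (b z, z))"
    using DERIV_unique[OF z(3) dh[OF zT]] .
  have dz: "d z > 0" using pos z by auto
  have "f (w z, z) - f (b z, z) \<le> \<kappa> * d z"
    using lipf[of "w z" z "b z"] dz by (simp add: d_def)
  hence "exp (- \<kappa> * z) * (f (w z, z) - f (b z, z)) \<le> exp (- \<kappa> * z) * (\<kappa> * d z)"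
    by (intro mult_left_mono) auto
  hence "L \<le> 0" using L by simp
  hence "h \<tau>1 \<le> h t0" using z t0lt by (smt (verit) mult_nonneg_nonpos)
  moreover have "h t0 \<le> 0" using t0le by (simp add: h_def mult_nonneg_nonpos)
  moreover have "h \<tau>1 > 0" using d1 by (simp add: h_def)
  ultimately show False by simp
qed

theorem lemma2p1:
  fixes f :: "real \<times> real \<Rightarrow> real" and \<kappa> :: real
    and v :: "real \<Rightarrow> real \<Rightarrow> real"
  assumes f_cont: "continuous_on UNIV f"
    and f_lip: "lipschitz_on \<kappa> UNIV f"
    and f_per: "\<And>r \<tau> (a::int) (b::int). f (r + of_int a, \<tau> + of_int b) = f (r, \<tau>)"
    and v_init: "\<And>c. v 0 c = c"
    and v_cont: "\<And>c. continuous_on {0..} (\<lambda>\<tau>. v \<tau> c)"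
    and v_ode: "\<And>c \<tau>. \<tau> > 0 \<Longrightarrow> ((\<lambda>s. v s c) has_real_derivative f (v \<tau> c, \<tau>)) (at \<tau>)"
    and "\<sigma> > 0" and "l > 0" and "t > 0"
  shows "v ((\<sigma> + l) * t) ((\<sigma> + l) * c)
           \<le> v (\<sigma> * t) (\<sigma> * c) + v (l * t) (l * c) + 2 * ((SUP p. \<bar>f p\<bar>) + 1)"
proof -
  define M where "M = (SUP p. \<bar>f p\<bar>)"
  have comp: "compact (f ` ({0..1} \<times> {0..1}))"
    by (intro compact_continuous_image continuous_on_subset[OF f_cont] compact_Times) auto
  have rng: "f p \<in> f ` ({0..1} \<times> {0..1})" for p
  proof (cases p)
    case (Pair r \<tau>)
    have "f (r - of_int \<lfloor>r\<rfloor> + of_int \<lfloor>r\<rfloor>, \<tau> - of_int \<lfloor>\<tau>\<rfloor> + of_int \<lfloor>\<tau>\<rfloor>)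
          = f (r - of_int \<lfloor>r\<rfloor>, \<tau> - of_int \<lfloor>\<tau>\<rfloor>)" by (rule f_per)
    hence "f p = f (r - of_int \<lfloor>r\<rfloor>, \<tau> - of_int \<lfloor>\<tau>\<rfloor>)" using Pair by simp
    moreover have "(r - of_int \<lfloor>r\<rfloor>, \<tau> - of_int \<lfloor>\<tau>\<rfloor>) \<in> {0..1} \<times> {0..1}"
      by (auto simp: floor_le_iff) (linarith+)
    ultimately show ?thesis by blast
  qed
  obtain B where B: "\<And>p. \<bar>f p\<bar> \<le> B"
    using compact_imp_bounded[OF comp] rng unfolding bounded_iff by (metis real_norm_def)
  have bdd: "bdd_above (range (\<lambda>p. \<bar>f p\<bar>))" by (rule bdd_aboveI[of _ B]) (use B in auto)
  have fM: "\<bar>f p\<bar> \<le> M" for p unfolding M_def using bdd by (intro cSUP_upper) simp_all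
  have M0: "M \<ge> 0" using fM[of undefined] by simp
  have tb: "\<bar>v \<tau>2 c' - v \<tau>1 c'\<bar> \<le> M * (\<tau>2 - \<tau>1)" if "0 \<le> \<tau>1" "\<tau>1 \<le> \<tau>2" for \<tau>1 \<tau>2 c'
  proof (cases "\<tau>1 = \<tau>2")
    case False
    hence lt: "\<tau>1 < \<tau>2" using that by simp
    have cc: "continuous_on {\<tau>1..\<tau>2} (\<lambda>s. v s c')"
      by (rule continuous_on_subset[OF v_cont]) (use that in auto)
    have "\<exists>L z. \<tau>1 < z \<and> z < \<tau>2 \<and> DERIV (\<lambda>s. v s c') z :> L \<and>
        v \<tau>2 c' - v \<tau>1 c' = (\<tau>2 - \<tau>1) * L"
    proof (rule MVT[OF lt cc])
      fix x assume "\<tau>1 < x" "x < \<tau>2"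
      hence "x > 0" using that by linarith
      thus "(\<lambda>s. v s c') differentiable (at x)" using v_ode real_differentiable_def by blast
    qed
    then obtain L z where z: "\<tau>1 < z" "z < \<tau>2" "DERIV (\<lambda>s. v s c') z :> L"
        "v \<tau>2 c' - v \<tau>1 c' = (\<tau>2 - \<tau>1) * L" by blast
    have "L = f (v z c', z)" using DERIV_unique[OF z(3) v_ode] z that by linarith
    hence "\<bar>L\<bar> \<le> M" using fM by simp
    thus ?thesis using z lt by (simp add: abs_mult mult.commute mult_left_mono)
  qed simp
  have shode: "((\<lambda>s. v (s - of_int n) c' + of_int j) has_real_derivative
         f (v (\<tau> - of_int n) c' + of_int j, \<tau>)) (at \<tau>)" if "\<tau> - of_int n > 0" for \<tau> c' n j
  proof -
    have d0: "((\<lambda>s. v s c') has_real_derivative f (v (\<tau> - of_int n) c', \<tau> - of_int n)) (at (\<tau> + - of_int n))"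
      using v_ode[OF that] by simp
    have "((\<lambda>s. v (s + - of_int n) c') has_real_derivative f (v (\<tau> - of_int n) c', \<tau> - of_int n)) (at \<tau>)"
      using DERIV_shift[THEN iffD1, OF d0] .
    hence "((\<lambda>s. v (s - of_int n) c' + of_int j) has_real_derivative f (v (\<tau> - of_int n) c', \<tau> - of_int n)) (at \<tau>)"
      by (auto intro!: derivative_eq_intros)
    moreover have "f (v (\<tau> - of_int n) c' + of_int j, \<tau> - of_int n + of_int n) = f (v (\<tau> - of_int n) c', \<tau> - of_int n)"
      by (rule f_per)
    ultimately show ?thesis by simp
  qed
  have shcont: "continuous_on {T0..} (\<lambda>s. v (s - of_int n) c' + of_int j)" if "T0 - of_int n \<ge> 0" for T0 c' n j
  proof -
    have "continuous_on {T0..} ((\<lambda>s. v s c') \<circ> (\<lambda>s. s - of_int n))"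
      by (rule continuous_on_compose) (auto intro!: continuous_intros continuous_on_subset[OF v_cont] simp: that, use that in linarith)
    thus ?thesis by (auto intro!: continuous_intros simp: o_def)
  qed
  define w where "w = (\<lambda>s. v s ((\<sigma> + l) * c))"
  define k where "k = \<lceil>l * c\<rceil>"
  have step1: "w (\<sigma> * t) \<le> v (\<sigma> * t) (\<sigma> * c) + of_int k"
  proof -
    have "w (\<sigma> * t) \<le> v (\<sigma> * t - of_int 0) (\<sigma> * c) + of_int k"
    proof (rule comparison[OF f_lip, where Ts=0 and w=w and b="\<lambda>s. v (s - of_int 0) (\<sigma> * c) + of_int k"])
      show "continuous_on {0..} w" unfolding w_def by (rule v_cont)
      show "continuous_on {0..} (\<lambda>s. v (s - of_int 0) (\<sigma> * c) + of_int k)" by (rule shcont) simp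
      show "(w has_real_derivative f (w \<tau>, \<tau>)) (at \<tau>)" if "\<tau> > 0" for \<tau>
        unfolding w_def using v_ode that .
      show "((\<lambda>s. v (s - of_int 0) (\<sigma> * c) + of_int k) has_real_derivative
         f (v (\<tau> - of_int 0) (\<sigma> * c) + of_int k, \<tau>)) (at \<tau>)" if "\<tau> > 0" for \<tau>
        by (rule shode) (use that in simp)
      show "w 0 \<le> v (0 - of_int 0) (\<sigma> * c) + of_int k"
        unfolding w_def k_def using v_init by (simp add: distrib_right)
      show "0 \<le> \<sigma> * t" using assms by simp
    qed
    thus ?thesis by simp
  qed
  define n where "n = \<lfloor>\<sigma> * t\<rfloor>"
  define s where "s = \<sigma> * t - of_int n"
  have s01: "0 \<le> s" "s \<le> 1" unfolding s_def n_def by linarith+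
  define j where "j = \<lceil>v (\<sigma> * t) (\<sigma> * c) + of_int k - l * c + M\<rceil>"
  have step2: "w ((\<sigma> + l) * t) \<le> v ((\<sigma> + l) * t - of_int n) (l * c) + of_int j"
  proof (rule comparison[OF f_lip, where Ts="\<sigma> * t" and w=w and b="\<lambda>x. v (x - of_int n) (l * c) + of_int j"])
    show "continuous_on {\<sigma> * t..} w" unfolding w_def
      by (rule continuous_on_subset[OF v_cont]) (use assms in auto)
    show "continuous_on {\<sigma> * t..} (\<lambda>x. v (x - of_int n) (l * c) + of_int j)"
      by (rule shcont) (use s01 s_def in simp)
    show "(w has_real_derivative f (w \<tau>, \<tau>)) (at \<tau>)" if "\<tau> > \<sigma> * t" for \<tau>
      unfolding w_def by (rule v_ode) (use that assms in \<open>smt (verit) mult_pos_pos\<close>)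
    show "((\<lambda>x. v (x - of_int n) (l * c) + of_int j) has_real_derivative
         f (v (\<tau> - of_int n) (l * c) + of_int j, \<tau>)) (at \<tau>)" if "\<tau> > \<sigma> * t" for \<tau>
      by (rule shode) (use that s01 s_def in simp)
    have "v s (l * c) \<ge> l * c - M * s" using tb[of 0 s "l * c"] s01 v_init by simp
    moreover have "M * s \<le> M" using M0 s01 by (simp add: mult_left_le)
    moreover have "of_int j \<ge> v (\<sigma> * t) (\<sigma> * c) + of_int k - l * c + M" unfolding j_def by linarith
    ultimately show "w (\<sigma> * t) \<le> v (\<sigma> * t - of_int n) (l * c) + of_int j"
      using step1 s_def by simp
    show "\<sigma> * t \<le> (\<sigma> + l) * t" using assms by (simp add: distrib_right)
  qed
  have e: "(\<sigma> + l) * t - of_int n = l * t + s" unfolding s_def by (simp add: distrib_right)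
  have "v (l * t + s) (l * c) \<le> v (l * t) (l * c) + M"
    using tb[of "l * t" "l * t + s" "l * c"] s01 assms M0 by (simp add: mult_left_le) (smt (verit) mult_left_le)
  moreover have "of_int j \<le> v (\<sigma> * t) (\<sigma> * c) + of_int k - l * c + M + 1" unfolding j_def by linarith
  moreover have "of_int k \<le> l * c + 1" unfolding k_def by linarith
  ultimately show ?thesis using step2 e unfolding w_def M_def by simp
qed

end
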